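(* Let $\mathbf{A},\mathbf{B}\in\mathbb{R}^{n\times m}$ be two matrices of the same shape. Then $\|\mathbf{A}\circ\mathbf{B}\|_{\mathrm{tr}}\le\mu(\mathbf{A})^2\,\|\mathbf{A}\|_{\mathrm{tr}}\,\|\mathbf{B}\|_{\mathrm{tr}}$.
   Context: $\circ$ denotes the Hadamard (entrywise) product and $\|\cdot\|_{\mathrm{tr}}$ the trace (nuclear) norm. Coherence: for a matrix $\mathbf{M}\in\mathbb{R}^{n\times m}$ of rank $r$ with (compact) SVD $\mathbf{M}=\mathbf{U}\boldsymbol\Sigma\mathbf{V}^\top$ ($\mathbf{U}\in\mathbb{R}^{n\times r}$, $\mathbf{V}\in\mathbb{R}^{m\times r}$), $\mu(\mathbf{M})=\max\{\max_{1\le i\le n}\|\mathbf{U}_{i,*}\|,\max_{1\le j\le m}\|\mathbf{V}_{j,*}\|\}$, where $\mathbf{U}_{i,*}$, $\mathbf{V}_{j,*}$ are rows and $\|\cdot\|$ is the Euclidean norm (not normalized by the matrix size). *)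

theory Defs
  imports "Jordan_Normal_Form.Matrix"
begin

definition hadamard :: "real mat \<Rightarrow> real mat \<Rightarrow> real mat" where
  "hadamard A B = mat (dim_row A) (dim_col A) (\<lambda>(i,j). A $$ (i,j) * B $$ (i,j))"

definition compact_svd :: "real mat \<Rightarrow> real mat \<Rightarrow> real mat \<Rightarrow> real mat \<Rightarrow> bool" where
  "compact_svd M U S V \<longleftrightarrow> (\<exists>r.
     U \<in> carrier_mat (dim_row M) r \<and> V \<in> carrier_mat (dim_col M) r \<and>
     S \<in> carrier_mat r r \<and> diagonal_mat S \<and> (\<forall>i<r. S $$ (i,i) > 0) \<and>
     transpose_mat U * U = 1\<^sub>m r \<and> transpose_mat V * V = 1\<^sub>m r \<and>
     M = U * S * transpose_mat V)"

definition some_svd :: "real mat \<Rightarrow> real mat \<times> real mat \<times> real mat" where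
  "some_svd M = (SOME (U,S,V). compact_svd M U S V)"

definition trace_norm :: "real mat \<Rightarrow> real" where
  "trace_norm M = (case some_svd M of (U,S,V) \<Rightarrow> (\<Sum>i<dim_row S. S $$ (i,i)))"

definition row_norm :: "real mat \<Rightarrow> nat \<Rightarrow> real" where
  "row_norm U i = sqrt (\<Sum>j<dim_col U. (U $$ (i,j))\<^sup>2)"

text \<open>Coherence (unnormalized): max Euclidean row norm of U and V in the compact SVD.
  0 is included only to make Max well-defined when there are no rows.\<close>
definition coherence :: "real mat \<Rightarrow> real" where
  "coherence M = (case some_svd M of (U,S,V) \<Rightarrow>
     Max ({0} \<union> row_norm U ` {..<dim_row U} \<union> row_norm V ` {..<dim_row V}))"

end

theory Submission
  imports Defs "Jordan_Normal_Form.Spectral_Radius" "Jordan_Normal_Form.Schur_Decomposition" "HOL-Analysis.Convex"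
begin

lemma sym_real_eigvec:
  fixes S :: "real mat"
  assumes S: "S \<in> carrier_mat n n" and sym: "\<And>i j. i < n \<Longrightarrow> j < n \<Longrightarrow> S $$ (i,j) = S $$ (j,i)"
    and n: "n > 0"
  shows "\<exists>a x. x \<in> carrier_vec n \<and> x \<noteq> 0\<^sub>v n \<and> S *\<^sub>v x = a \<cdot>\<^sub>v x"
proof -
  define CS where "CS = map_mat complex_of_real S"
  have CS: "CS \<in> carrier_mat n n" using S unfolding CS_def by auto
  from spectrum_non_empty[OF CS n] obtain mu where "mu \<in> spectrum CS" by auto
  then obtain v where v: "v \<in> carrier_vec n" "v \<noteq> 0\<^sub>v n" "CS *\<^sub>v v = mu \<cdot>\<^sub>v v"
    unfolding spectrum_def eigenvalue_def eigenvector_def using CS by auto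
  define x where "x = vec n (\<lambda>i. Re (v $ i))"
  define y where "y = vec n (\<lambda>i. Im (v $ i))"
  define a where "a = Re mu"
  define b where "b = Im mu"
  have ev: "(\<Sum>j=0..<n. complex_of_real (S $$ (i,j)) * v $ j) = mu * v $ i" if i: "i < n" for i
  proof -
    have "(CS *\<^sub>v v) $ i = (mu \<cdot>\<^sub>v v) $ i" using v(3) by simp
    thus ?thesis using i S v(1) CS unfolding CS_def
      by (simp add: scalar_prod_def)
  qed
  have ex: "(\<Sum>j=0..<n. S $$ (i,j) * x $ j) = a * x $ i - b * y $ i" if i: "i < n" for i
  proof -
    have "Re (\<Sum>j=0..<n. complex_of_real (S $$ (i,j)) * v $ j) = Re (mu * v $ i)" using ev[OF i] by simp
    thus ?thesis unfolding x_def y_def a_def b_def using i by (simp add: Re_sum)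
  qed
  have ey: "(\<Sum>j=0..<n. S $$ (i,j) * y $ j) = b * x $ i + a * y $ i" if i: "i < n" for i
  proof -
    have "Im (\<Sum>j=0..<n. complex_of_real (S $$ (i,j)) * v $ j) = Im (mu * v $ i)" using ev[OF i] by simp
    thus ?thesis unfolding x_def y_def a_def b_def using i by (simp add: Im_sum algebra_simps)
  qed
  have "(\<Sum>i=0..<n. y $ i * (\<Sum>j=0..<n. S $$ (i,j) * x $ j)) = (\<Sum>i=0..<n. x $ i * (\<Sum>j=0..<n. S $$ (i,j) * y $ j))"
  proof -
    have "(\<Sum>i=0..<n. y $ i * (\<Sum>j=0..<n. S $$ (i,j) * x $ j)) = (\<Sum>i=0..<n. \<Sum>j=0..<n. y $ i * S $$ (i,j) * x $ j)"
      by (simp add: sum_distrib_left mult.assoc)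
    also have "\<dots> = (\<Sum>j=0..<n. \<Sum>i=0..<n. y $ i * S $$ (i,j) * x $ j)" by (rule sum.swap)
    also have "\<dots> = (\<Sum>j=0..<n. x $ j * (\<Sum>i=0..<n. S $$ (j,i) * y $ i))"
      by (auto simp: sum_distrib_left sym intro!: sum.cong)
    finally show ?thesis .
  qed
  hence "(\<Sum>i=0..<n. y $ i * (a * x $ i - b * y $ i)) = (\<Sum>i=0..<n. x $ i * (b * x $ i + a * y $ i))"
    using ex ey by simp
  hence "b * (\<Sum>i=0..<n. (x $ i)^2 + (y $ i)^2) = 0"
    by (simp add: algebra_simps sum.distrib sum_distrib_left sum_subtractf power2_eq_square)
  moreover have "(\<Sum>i=0..<n. (x $ i)^2 + (y $ i)^2) > 0"
  proof -
    from v(1,2) obtain k where k: "k < n" "v $ k \<noteq> 0" by (metis eq_vecI carrier_vecD index_zero_vec)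
    hence "(x $ k)^2 + (y $ k)^2 > 0" unfolding x_def y_def using complex_eq_iff
      by (auto simp: sum_power2_gt_zero_iff)
    moreover have "(x $ k)^2 + (y $ k)^2 \<le> (\<Sum>i=0..<n. (x $ i)^2 + (y $ i)^2)"
      by (rule member_le_sum) (use k in auto)
    ultimately show ?thesis by linarith
  qed
  ultimately have b0: "b = 0" by simp
  have xc: "x \<in> carrier_vec n" "y \<in> carrier_vec n" unfolding x_def y_def by auto
  have Sx: "S *\<^sub>v x = a \<cdot>\<^sub>v x"
    by (rule eq_vecI) (use S ex b0 in \<open>auto simp: scalar_prod_def x_def\<close>)
  have Sy: "S *\<^sub>v y = a \<cdot>\<^sub>v y"
    by (rule eq_vecI) (use S ey b0 in \<open>auto simp: scalar_prod_def y_def\<close>)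
  have "x \<noteq> 0\<^sub>v n \<or> y \<noteq> 0\<^sub>v n"
  proof (rule ccontr)
    assume "\<not> ?thesis"
    hence "v = 0\<^sub>v n"
    proof (intro eq_vecI)
      fix i assume i: "i < dim_vec (0\<^sub>v n :: complex vec)"
      have "x $ i = 0" "y $ i = 0" using \<open>\<not> (x \<noteq> 0\<^sub>v n \<or> y \<noteq> 0\<^sub>v n)\<close> i by auto
      thus "v $ i = 0\<^sub>v n $ i" using i unfolding x_def y_def by (simp add: complex_eq_iff)
    qed (use v(1) in auto)
    with v(2) show False by simp
  qed
  thus ?thesis using xc Sx Sy by blast
qed

lemma real_cscalar: "(v :: real vec) \<bullet>c w = v \<bullet> w"
  by (simp add: conjugate_vec_def scalar_prod_def)

lemma ortho_complete:
  fixes w :: "real vec"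
  assumes w: "w \<in> carrier_vec n" and w1: "w \<bullet> w = 1"
  shows "\<exists>W \<in> carrier_mat n n. transpose_mat W * W = 1\<^sub>m n \<and> col W 0 = w"
proof -
  interpret cof_vec_space n "TYPE(real)" .
  have w0: "w \<noteq> 0\<^sub>v n" using w1 w by auto
  define b where "b = basis_completion w"
  define ws where "ws = gram_schmidt n b"
  note bc = basis_completion[OF w w0, folded b_def]
  have n: "n > 0" using w0 w by (cases n) auto
  from bc(7,6) n obtain vs where bv: "b = w # vs" by (cases b) auto
  note gs = gram_schmidt_result[OF bc(2) bc(4) bc(5) ws_def]
  have hd: "ws ! 0 = w"
  proof -
    have "hd ws = w" using gram_schmidt_hd[OF w, of vs] bv ws_def by simp
    moreover have "ws \<noteq> []" using gs(4) bc(6) n by auto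
    ultimately show ?thesis by (simp add: hd_conv_nth)
  qed
  have len: "length ws = n" using gs(4) bc(6) by simp
  have wsc: "i < n \<Longrightarrow> ws ! i \<in> carrier_vec n" for i using gs(3) len by auto
  have orth: "i < n \<Longrightarrow> j < n \<Longrightarrow> (ws ! i \<bullet> ws ! j = 0) = (i \<noteq> j)" for i j
    using gs(2) len unfolding corthogonal_def real_cscalar by auto
  define nr where "nr i = sqrt (ws ! i \<bullet> ws ! i)" for i
  have pos: "i < n \<Longrightarrow> ws ! i \<bullet> ws ! i > 0" for i
  proof -
    assume i: "i < n"
    have "ws ! i \<bullet> ws ! i \<ge> 0" unfolding scalar_prod_def by (auto intro: sum_nonneg)
    with orth[OF i i] show ?thesis by auto
  qed
  define W where "W = mat n n (\<lambda>(i,j). ws ! j $ i / nr j)"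
  have WC: "W \<in> carrier_mat n n" unfolding W_def by auto
  have "transpose_mat W * W = 1\<^sub>m n"
  proof (rule eq_matI)
    fix i j assume i: "i < dim_row (1\<^sub>m n :: real mat)" and j: "j < dim_col (1\<^sub>m n :: real mat)"
    hence i: "i < n" and j: "j < n" by auto
    have "(transpose_mat W * W) $$ (i,j) = (\<Sum>k=0..<n. ws ! i $ k * ws ! j $ k) / (nr i * nr j)"
      using i j unfolding W_def by (simp add: scalar_prod_def sum_divide_distrib)
    also have "(\<Sum>k=0..<n. ws ! i $ k * ws ! j $ k) = ws ! i \<bullet> ws ! j"
      using wsc[OF j] by (simp add: scalar_prod_def)
    finally have e: "(transpose_mat W * W) $$ (i,j) = ws ! i \<bullet> ws ! j / (nr i * nr j)" .
    show "(transpose_mat W * W) $$ (i,j) = 1\<^sub>m n $$ (i,j)"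
    proof (cases "i = j")
      case True
      have "nr i * nr i = ws ! i \<bullet> ws ! i" unfolding nr_def using pos[OF i] by simp
      thus ?thesis using e True i pos[OF i] by simp
    next
      case False
      thus ?thesis using e orth[OF i j] i j by simp
    qed
  qed (auto simp: W_def)
  moreover have "col W 0 = w"
  proof -
    have "nr 0 = 1" unfolding nr_def hd w1 by simp
    thus ?thesis using n w unfolding W_def by (intro eq_vecI) (auto simp: hd)
  qed
  ultimately show ?thesis using WC by blast
qed

lemma sym_transpose: "S \<in> carrier_mat n n \<Longrightarrow> (\<And>i j. i < n \<Longrightarrow> j < n \<Longrightarrow> S $$ (i,j) = S $$ (j,i))
   \<Longrightarrow> transpose_mat S = S"
  by (intro eq_matI) auto

lemma mult4_assoc1: assumes "A \<in> carrier_mat n n" "B \<in> carrier_mat n n" "C \<in> carrier_mat n n" "D \<in> carrier_mat n n"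
  shows "(A * B) * (C * D) = A * (B * C) * D"
proof -
  have "(A * B) * (C * D) = A * (B * (C * D))" by (rule assoc_mult_mat) (use assms in auto)
  moreover have "A * (B * C) * D = A * ((B * C) * D)" by (rule assoc_mult_mat) (use assms in auto)
  moreover have "(B * C) * D = B * (C * D)" by (rule assoc_mult_mat) (use assms in auto)
  ultimately show ?thesis by simp
qed

lemma mult4_assoc2: assumes "A \<in> carrier_mat n n" "B \<in> carrier_mat n n" "C \<in> carrier_mat n n" "D \<in> carrier_mat n n"
  "E \<in> carrier_mat n n"
  shows "(A * B) * C * (D * E) = A * (B * C * D) * E"
proof -
  have "(A * B) * C = A * (B * C)" by (rule assoc_mult_mat) (use assms in auto)
  hence "(A * B) * C * (D * E) = (A * (B * C)) * (D * E)" by simp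
  also have "\<dots> = A * ((B * C) * D) * E" by (rule mult4_assoc1) (use assms in auto)
  finally show ?thesis .
qed

lemma spectral:
  fixes S :: "real mat"
  assumes "S \<in> carrier_mat n n" and "\<And>i j. i < n \<Longrightarrow> j < n \<Longrightarrow> S $$ (i,j) = S $$ (j,i)"
  shows "\<exists>Q \<in> carrier_mat n n. transpose_mat Q * Q = 1\<^sub>m n \<and>
     (\<forall>i<n. \<forall>j<n. i \<noteq> j \<longrightarrow> (transpose_mat Q * S * Q) $$ (i,j) = 0)"
  using assms
proof (induction n arbitrary: S)
  case 0
  show ?case by (intro bexI[of _ "1\<^sub>m 0"]) auto
next
  case (Suc n)
  note S = Suc.prems(1) and sym = Suc.prems(2)
  from sym_real_eigvec[OF S sym] obtain a x where x: "x \<in> carrier_vec (Suc n)" "x \<noteq> 0\<^sub>v (Suc n)"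
    "S *\<^sub>v x = a \<cdot>\<^sub>v x" by auto
  have xx: "x \<bullet> x > 0"
  proof -
    from x(1,2) obtain k where k: "k < Suc n" "x $ k \<noteq> 0" by (metis eq_vecI carrier_vecD index_zero_vec)
    have "(x $ k)^2 \<le> (\<Sum>i\<in>{0..<Suc n}. (x $ i)^2)" by (rule member_le_sum) (use k in auto)
    moreover have "(x $ k)^2 > 0" using k by simp
    ultimately show ?thesis using x(1) by (simp add: scalar_prod_def power2_eq_square)
  qed
  define w where "w = (1 / sqrt (x \<bullet> x)) \<cdot>\<^sub>v x"
  have wc: "w \<in> carrier_vec (Suc n)" using x unfolding w_def by auto
  have w1: "w \<bullet> w = 1" using xx x(1) unfolding w_def
    by (simp add: smult_scalar_prod_distrib scalar_prod_smult_distrib power2_eq_square[symmetric])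
  have Sw: "S *\<^sub>v w = a \<cdot>\<^sub>v w" using x S unfolding w_def
    by (simp add: mult_mat_vec smult_smult_assoc mult.commute)
  from ortho_complete[OF wc w1] obtain W where W: "W \<in> carrier_mat (Suc n) (Suc n)"
    "transpose_mat W * W = 1\<^sub>m (Suc n)" "col W 0 = w" by auto
  define A' where "A' = transpose_mat W * S * W"
  have A'c: "A' \<in> carrier_mat (Suc n) (Suc n)" using W S unfolding A'_def by auto
  have col0: "col A' 0 = a \<cdot>\<^sub>v unit_vec (Suc n) 0"
  proof -
    have "col A' 0 = (transpose_mat W * S) *\<^sub>v col W 0" unfolding A'_def
      by (rule col_mult2[of _ _ "Suc n"]) (use W S in auto)
    also have "\<dots> = transpose_mat W *\<^sub>v (S *\<^sub>v w)" using W S wc by (simp)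
    also have "\<dots> = a \<cdot>\<^sub>v (transpose_mat W *\<^sub>v col W 0)" using Sw W wc by (simp add: mult_mat_vec)
    also have "transpose_mat W *\<^sub>v col W 0 = col (transpose_mat W * W) 0"
      by (rule col_mult2[symmetric, of _ _ "Suc n"]) (use W in auto)
    also have "\<dots> = unit_vec (Suc n) 0" using W by simp
    finally show ?thesis .
  qed
  have A'sym: "transpose_mat A' = A'"
  proof -
    have "transpose_mat A' = transpose_mat W * transpose_mat (transpose_mat W * S)" unfolding A'_def
      by (rule transpose_mult[of _ "Suc n" "Suc n"]) (use W S in auto)
    also have "transpose_mat (transpose_mat W * S) = transpose_mat S * W"
      by (subst transpose_mult[of _ "Suc n" "Suc n"]) (use W S in auto)
    finally show ?thesis using sym_transpose[OF S sym] W S unfolding A'_def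
      by (simp add: assoc_mult_mat[of _ "Suc n" "Suc n"])
  qed
  have Ai0: "i < Suc n \<Longrightarrow> A' $$ (i,0) = (if i = 0 then a else 0)" for i
    using arg_cong[OF col0, of "\<lambda>v. v $ i"] A'c by (auto simp: col_def)
  have A0j: "j < Suc n \<Longrightarrow> A' $$ (0,j) = (if j = 0 then a else 0)" for j
    using Ai0[of j] arg_cong[OF A'sym, of "\<lambda>M. M $$ (j,0)"] A'c by auto
  define S' where "S' = mat n n (\<lambda>(i,j). A' $$ (Suc i, Suc j))"
  have S'c: "S' \<in> carrier_mat n n" unfolding S'_def by auto
  have S'sym: "i < n \<Longrightarrow> j < n \<Longrightarrow> S' $$ (i,j) = S' $$ (j,i)" for i j
    using arg_cong[OF A'sym, of "\<lambda>M. M $$ (Suc j, Suc i)"] A'c unfolding S'_def by auto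
  from Suc.IH[OF S'c S'sym] obtain Q' where Q': "Q' \<in> carrier_mat n n" "transpose_mat Q' * Q' = 1\<^sub>m n"
    "\<forall>i<n. \<forall>j<n. i \<noteq> j \<longrightarrow> (transpose_mat Q' * S' * Q') $$ (i,j) = 0" by blast
  define a1 :: "real mat" where "a1 = mat 1 1 (\<lambda>_. a)"
  have A'blk: "A' = four_block_mat a1 (0\<^sub>m 1 n) (0\<^sub>m n 1) S'"
    by (rule eq_matI) (use A'c Ai0 A0j in \<open>auto simp: a1_def S'_def\<close>)
  define Q'' where "Q'' = four_block_mat (1\<^sub>m 1) (0\<^sub>m 1 n) (0\<^sub>m n 1) Q'"
  have Q''c: "Q'' \<in> carrier_mat (Suc n) (Suc n)" using Q' unfolding Q''_def by auto
  have Q''T: "transpose_mat Q'' = four_block_mat (1\<^sub>m 1) (0\<^sub>m 1 n) (0\<^sub>m n 1) (transpose_mat Q')"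
    unfolding Q''_def by (subst transpose_four_block_mat) (use Q' in auto)
  have Q''Q'': "transpose_mat Q'' * Q'' = 1\<^sub>m (Suc n)"
  proof -
    have "transpose_mat Q'' * Q'' = four_block_mat (1\<^sub>m 1) (0\<^sub>m 1 n) (0\<^sub>m n 1) (transpose_mat Q' * Q')"
      unfolding Q''T unfolding Q''_def by (subst mult_four_block_mat) (use Q' in auto)
    also have "\<dots> = 1\<^sub>m (Suc n)" unfolding Q'(2) by (rule eq_matI) auto
    finally show ?thesis .
  qed
  have blk: "transpose_mat Q'' * A' * Q'' = four_block_mat a1 (0\<^sub>m 1 n) (0\<^sub>m n 1) (transpose_mat Q' * S' * Q')"
  proof -
    have "transpose_mat Q'' * A' = four_block_mat a1 (0\<^sub>m 1 n) (0\<^sub>m n 1) (transpose_mat Q' * S')"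
      unfolding Q''T A'blk by (subst mult_four_block_mat) (use Q' S'c in \<open>auto simp: a1_def\<close>)
    also have "\<dots> * Q'' = four_block_mat a1 (0\<^sub>m 1 n) (0\<^sub>m n 1) (transpose_mat Q' * S' * Q')"
      unfolding Q''_def by (subst mult_four_block_mat) (use Q' S'c in \<open>auto simp: a1_def\<close>)
    finally show ?thesis .
  qed
  define Q where "Q = W * Q''"
  have Qc: "Q \<in> carrier_mat (Suc n) (Suc n)" using W Q''c unfolding Q_def by auto
  have QT: "transpose_mat Q = transpose_mat Q'' * transpose_mat W"
    unfolding Q_def using W Q''c by (simp add: transpose_mult[of _ "Suc n" "Suc n"])
  have "transpose_mat Q * Q = transpose_mat Q'' * (transpose_mat W * W) * Q''"
    unfolding QT unfolding Q_def by (rule mult4_assoc1) (use W Q''c in auto)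
  hence QQ: "transpose_mat Q * Q = 1\<^sub>m (Suc n)" using W Q''Q'' Q''c by simp
  have eqQ: "transpose_mat Q * S * Q = transpose_mat Q'' * A' * Q''"
    unfolding QT unfolding Q_def A'_def by (rule mult4_assoc2) (use W Q''c S in auto)
  have diag: "\<forall>i<Suc n. \<forall>j<Suc n. i \<noteq> j \<longrightarrow> (transpose_mat Q * S * Q) $$ (i,j) = 0"
    unfolding eqQ blk
  proof (intro allI impI)
    fix i j assume ij: "i < Suc n" "j < Suc n" "i \<noteq> j"
    have D: "transpose_mat Q' * S' * Q' \<in> carrier_mat n n" using Q' S'c by auto
    show "four_block_mat a1 (0\<^sub>m 1 n) (0\<^sub>m n 1) (transpose_mat Q' * S' * Q') $$ (i,j) = 0"
      using D ij Q'(3) by (cases i; cases j) (auto simp: a1_def)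
  qed
  show ?case using Qc QQ diag by blast
qed

lemma sum_nth_distinct: "distinct ks \<Longrightarrow> (\<Sum>b=0..<length ks. f (ks ! b)) = (\<Sum>k\<in>set ks. f k)"
  using sum_list_sum_nth[of "map f ks"] sum_list_distinct_conv_sum_set[of ks f] by simp

lemma svd_exists:
  fixes M :: "real mat"
  assumes M: "M \<in> carrier_mat n m"
  shows "\<exists>U S V. compact_svd M U S V"
proof -
  define G where "G = transpose_mat M * M"
  have Gc: "G \<in> carrier_mat m m" using M unfolding G_def by auto
  have Gsym: "i < m \<Longrightarrow> j < m \<Longrightarrow> G $$ (i,j) = G $$ (j,i)" for i j
    using M unfolding G_def by (auto simp: comm_scalar_prod[of _ n])
  from spectral[OF Gc Gsym] obtain Q where Q: "Q \<in> carrier_mat m m" "transpose_mat Q * Q = 1\<^sub>m m"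
    "\<forall>i<m. \<forall>j<m. i \<noteq> j \<longrightarrow> (transpose_mat Q * G * Q) $$ (i,j) = 0" by blast
  have QQT: "Q * transpose_mat Q = 1\<^sub>m m"
    by (rule mat_mult_left_right_inverse[OF _ _ Q(2)]) (use Q in auto)
  define N where "N = M * Q"
  have Nc: "N \<in> carrier_mat n m" using M Q unfolding N_def by auto
  have NTN: "transpose_mat Q * G * Q = transpose_mat N * N"
  proof -
    have "transpose_mat N = transpose_mat Q * transpose_mat M" unfolding N_def
      by (rule transpose_mult) (use M Q in auto)
    moreover have "transpose_mat Q * (transpose_mat M * M) = (transpose_mat Q * transpose_mat M) * M"
      by (rule assoc_mult_mat[symmetric]) (use M Q in auto)
    moreover have "(transpose_mat Q * transpose_mat M) * M * Q = (transpose_mat Q * transpose_mat M) * (M * Q)"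
      by (rule assoc_mult_mat) (use M Q in auto)
    ultimately show ?thesis unfolding G_def N_def by simp
  qed
  have Nent: "k < m \<Longrightarrow> l < m \<Longrightarrow> (transpose_mat N * N) $$ (k,l) = (\<Sum>i=0..<n. N $$ (i,k) * N $$ (i,l))" for k l
    using Nc by (simp add: scalar_prod_def)
  have Northo: "k < m \<Longrightarrow> l < m \<Longrightarrow> k \<noteq> l \<Longrightarrow> (\<Sum>i=0..<n. N $$ (i,k) * N $$ (i,l)) = 0" for k l
    using Q(3) NTN Nent by metis
  define d where "d k = (\<Sum>i=0..<n. (N $$ (i,k))^2)" for k
  have d0: "d k \<ge> 0" for k unfolding d_def by (auto intro: sum_nonneg)
  have dz: "d k = 0 \<Longrightarrow> i < n \<Longrightarrow> N $$ (i,k) = 0" for k i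
    unfolding d_def by (subst (asm) sum_nonneg_eq_0_iff) auto
  define ks where "ks = filter (\<lambda>k. d k > 0) [0..<m]"
  define r where "r = length ks"
  have ksd: "distinct ks" unfolding ks_def by auto
  have ksm: "b < r \<Longrightarrow> ks ! b < m" for b unfolding r_def ks_def
    using nth_mem by fastforce
  have ksp: "b < r \<Longrightarrow> d (ks ! b) > 0" for b unfolding r_def ks_def
    using nth_mem by fastforce
  have ksset: "set ks = {k. k < m \<and> d k > 0}" unfolding ks_def by auto
  have ksinj: "a < r \<Longrightarrow> b < r \<Longrightarrow> (ks ! a = ks ! b) = (a = b)" for a b
    using ksd unfolding r_def by (simp add: nth_eq_iff_index_eq)
  define sg where "sg b = sqrt (d (ks ! b))" for b
  have sgp: "b < r \<Longrightarrow> sg b > 0" for b using ksp unfolding sg_def by simp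
  define U where "U = mat n r (\<lambda>(i,b). N $$ (i, ks ! b) / sg b)"
  define S where "S = mat r r (\<lambda>(a,b). if a = b then sg a else 0)"
  define V where "V = mat m r (\<lambda>(j,b). Q $$ (j, ks ! b))"
  have Uc: "U \<in> carrier_mat n r" and Sc: "S \<in> carrier_mat r r" and Vc: "V \<in> carrier_mat m r"
    unfolding U_def S_def V_def by auto
  have diagS: "diagonal_mat S" unfolding S_def diagonal_mat_def by auto
  have Spos: "\<forall>i<r. S $$ (i,i) > 0" unfolding S_def using sgp by auto
  have UU: "transpose_mat U * U = 1\<^sub>m r"
  proof (rule eq_matI)
    fix a b assume "a < dim_row (1\<^sub>m r :: real mat)" "b < dim_col (1\<^sub>m r :: real mat)"
    hence a: "a < r" and b: "b < r" by auto
    have "(transpose_mat U * U) $$ (a,b) = (\<Sum>i=0..<n. N $$ (i, ks ! a) * N $$ (i, ks ! b)) / (sg a * sg b)"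
      using a b unfolding U_def by (simp add: scalar_prod_def sum_divide_distrib)
    also have "\<dots> = 1\<^sub>m r $$ (a,b)"
    proof (cases "a = b")
      case True
      have "sg a * sg a = d (ks ! a)" unfolding sg_def using d0 by simp
      moreover have "sg a * sg a > 0" using sgp[OF a] by simp
      ultimately show ?thesis using True a unfolding d_def by (simp add: power2_eq_square)
    next
      case False
      thus ?thesis using Northo[OF ksm[OF a] ksm[OF b]] ksinj[OF a b] a b by simp
    qed
    finally show "(transpose_mat U * U) $$ (a,b) = 1\<^sub>m r $$ (a,b)" .
  qed (use Uc in auto)
  have VV: "transpose_mat V * V = 1\<^sub>m r"
  proof (rule eq_matI)
    fix a b assume "a < dim_row (1\<^sub>m r :: real mat)" "b < dim_col (1\<^sub>m r :: real mat)"
    hence a: "a < r" and b: "b < r" by auto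
    have "(transpose_mat V * V) $$ (a,b) = (transpose_mat Q * Q) $$ (ks ! a, ks ! b)"
      using a b ksm[OF a] ksm[OF b] Q(1) unfolding V_def by (simp add: scalar_prod_def)
    thus "(transpose_mat V * V) $$ (a,b) = 1\<^sub>m r $$ (a,b)"
      using Q(2) ksm[OF a] ksm[OF b] ksinj[OF a b] a b by simp
  qed (use Vc in auto)
  have USV: "M = U * S * transpose_mat V"
  proof (rule eq_matI)
    fix i j assume "i < dim_row (U * S * transpose_mat V)" "j < dim_col (U * S * transpose_mat V)"
    hence i: "i < n" and j: "j < m" using Uc Vc Sc by auto
    have US: "(U * S) $$ (i,b) = N $$ (i, ks ! b)" if b: "b < r" for b
    proof -
      have "(U * S) $$ (i,b) = (\<Sum>a=0..<r. U $$ (i,a) * S $$ (a,b))"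
        using i b Uc Sc by (simp add: scalar_prod_def)
      also have "\<dots> = (\<Sum>a=0..<r. if a = b then U $$ (i,b) * sg b else 0)"
        by (rule sum.cong) (auto simp: S_def b)
      also have "\<dots> = U $$ (i,b) * sg b" using b by simp
      also have "\<dots> = N $$ (i, ks ! b)" using sgp[OF b] i b unfolding U_def by simp
      finally show ?thesis .
    qed
    have "(U * S * transpose_mat V) $$ (i,j) = (\<Sum>b=0..<r. (U * S) $$ (i,b) * V $$ (j,b))"
      using i j Uc Sc Vc by (simp add: scalar_prod_def del: assoc_mult_mat)
    also have "\<dots> = (\<Sum>b=0..<r. N $$ (i, ks ! b) * Q $$ (j, ks ! b))"
      by (rule sum.cong) (use US j in \<open>auto simp: V_def\<close>)
    also have "\<dots> = (\<Sum>k\<in>set ks. N $$ (i, k) * Q $$ (j, k))"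
      unfolding r_def by (rule sum_nth_distinct[OF ksd])
    also have "\<dots> = (\<Sum>k=0..<m. N $$ (i, k) * Q $$ (j, k))"
    proof (rule sum.mono_neutral_left)
      show "\<forall>k\<in>{0..<m} - set ks. N $$ (i, k) * Q $$ (j, k) = 0"
        using dz d0 i unfolding ksset by (auto simp: order.order_iff_strict)
    qed (auto simp: ksset)
    also have "\<dots> = (N * transpose_mat Q) $$ (i,j)" using i j Nc Q(1) by (simp add: scalar_prod_def)
    also have "N * transpose_mat Q = M" unfolding N_def using M Q QQT by (simp add: assoc_mult_mat[of _ n m])
    finally show "M $$ (i,j) = (U * S * transpose_mat V) $$ (i,j)" by simp
  qed (use M Uc Vc Sc in auto)
  have "compact_svd M U S V" unfolding compact_svd_def
    using Uc Vc Sc diagS Spos UU VV USV M by (intro exI[of _ r]) auto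
  thus ?thesis by blast
qed

lemma some_svd_ok:
  assumes "M \<in> carrier_mat n m" and "some_svd M = (U,S,V)"
  shows "compact_svd M U S V"
proof -
  from svd_exists[OF assms(1)] obtain U0 S0 V0 where "compact_svd M U0 S0 V0" by blast
  hence "\<exists>x. (\<lambda>(U,S,V). compact_svd M U S V) x" by (intro exI[of _ "(U0,S0,V0)"]) simp
  from someI_ex[OF this] show ?thesis using assms(2) unfolding some_svd_def by simp
qed

lemma sum4_swap: "(\<Sum>i\<in>I. \<Sum>j\<in>J. \<Sum>k\<in>K. \<Sum>l\<in>L. f i j k l) = (\<Sum>k\<in>K. \<Sum>l\<in>L. \<Sum>i\<in>I. \<Sum>j\<in>J. f i j k l)"
proof -
  have "(\<Sum>i\<in>I. \<Sum>j\<in>J. \<Sum>k\<in>K. \<Sum>l\<in>L. f i j k l) = (\<Sum>i\<in>I. \<Sum>k\<in>K. \<Sum>j\<in>J. \<Sum>l\<in>L. f i j k l)"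
    by (rule sum.cong[OF refl], rule sum.swap)
  also have "\<dots> = (\<Sum>k\<in>K. \<Sum>i\<in>I. \<Sum>j\<in>J. \<Sum>l\<in>L. f i j k l)" by (rule sum.swap)
  also have "\<dots> = (\<Sum>k\<in>K. \<Sum>i\<in>I. \<Sum>l\<in>L. \<Sum>j\<in>J. f i j k l)"
    by (rule sum.cong[OF refl], rule sum.cong[OF refl], rule sum.swap)
  also have "\<dots> = (\<Sum>k\<in>K. \<Sum>l\<in>L. \<Sum>i\<in>I. \<Sum>j\<in>J. f i j k l)"
    by (rule sum.cong[OF refl], rule sum.swap)
  finally show ?thesis .
qed

lemma sum3_swap: "(\<Sum>s\<in>I. \<Sum>k\<in>K. \<Sum>l\<in>L. f s k l) = (\<Sum>k\<in>K. \<Sum>l\<in>L. \<Sum>s\<in>I. f s k l)"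
proof -
  have "(\<Sum>s\<in>I. \<Sum>k\<in>K. \<Sum>l\<in>L. f s k l) = (\<Sum>k\<in>K. \<Sum>s\<in>I. \<Sum>l\<in>L. f s k l)" by (rule sum.swap)
  also have "\<dots> = (\<Sum>k\<in>K. \<Sum>l\<in>L. \<Sum>s\<in>I. f s k l)" by (rule sum.cong[OF refl], rule sum.swap)
  finally show ?thesis .
qed

lemma cs_sqrt: "(\<Sum>i\<in>I. a i * b i) \<le> sqrt (\<Sum>i\<in>I. (a i)\<^sup>2) * sqrt (\<Sum>i\<in>I. (b i :: real)\<^sup>2)"
proof -
  have "(\<Sum>i\<in>I. a i * b i) \<le> sqrt ((\<Sum>i\<in>I. a i * b i)\<^sup>2)" by simp
  also have "\<dots> \<le> sqrt ((\<Sum>i\<in>I. (a i)\<^sup>2) * (\<Sum>i\<in>I. (b i)\<^sup>2))"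
    by (rule real_sqrt_le_mono, rule Cauchy_Schwarz_ineq_sum)
  finally show ?thesis by (simp add: real_sqrt_mult)
qed

lemma orth_entry:
  assumes U: "U \<in> carrier_mat n r" and UU: "transpose_mat U * U = 1\<^sub>m r" and s: "s < r" and t: "t < r"
  shows "(\<Sum>i=0..<n. U $$ (i,s) * U $$ (i,t)) = (if s = t then 1 else 0)"
proof -
  have "(transpose_mat U * U) $$ (s,t) = (\<Sum>i=0..<n. U $$ (i,s) * U $$ (i,t))"
    using U s t by (simp add: scalar_prod_def)
  thus ?thesis using UU s t by simp
qed

lemma bessel:
  fixes U :: "real mat"
  assumes U: "U \<in> carrier_mat n r" and UU: "transpose_mat U * U = 1\<^sub>m r"
  shows "(\<Sum>s=0..<r. (\<Sum>i=0..<n. U $$ (i,s) * w i)\<^sup>2) \<le> (\<Sum>i=0..<n. (w i)\<^sup>2)"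
proof -
  define y where "y s = (\<Sum>i=0..<n. U $$ (i,s) * w i)" for s
  define z where "z i = (\<Sum>s=0..<r. U $$ (i,s) * y s)" for i
  have wz: "(\<Sum>i=0..<n. w i * z i) = (\<Sum>s=0..<r. (y s)\<^sup>2)"
  proof -
    have "(\<Sum>i=0..<n. w i * z i) = (\<Sum>i=0..<n. \<Sum>s=0..<r. y s * (U $$ (i,s) * w i))"
      unfolding z_def by (simp add: sum_distrib_left mult_ac)
    also have "\<dots> = (\<Sum>s=0..<r. y s * y s)" unfolding y_def[symmetric]
      by (subst sum.swap) (simp add: sum_distrib_left y_def)
    finally show ?thesis by (simp add: power2_eq_square)
  qed
  have Uz: "(\<Sum>i=0..<n. U $$ (i,s) * z i) = y s" if s: "s < r" for s
  proof -
    have "(\<Sum>i=0..<n. U $$ (i,s) * z i) = (\<Sum>i=0..<n. \<Sum>t=0..<r. y t * (U $$ (i,s) * U $$ (i,t)))"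
      unfolding z_def by (simp add: sum_distrib_left mult_ac)
    also have "\<dots> = (\<Sum>t=0..<r. y t * (\<Sum>i=0..<n. U $$ (i,s) * U $$ (i,t)))"
      by (subst sum.swap) (simp add: sum_distrib_left)
    also have "\<dots> = (\<Sum>t=0..<r. if s = t then y t else 0)"
      by (rule sum.cong) (use orth_entry[OF U UU s] in auto)
    also have "\<dots> = y s" using s by simp
    finally show ?thesis .
  qed
  have zz: "(\<Sum>i=0..<n. (z i)\<^sup>2) = (\<Sum>s=0..<r. (y s)\<^sup>2)"
  proof -
    have "(\<Sum>i=0..<n. (z i)\<^sup>2) = (\<Sum>i=0..<n. \<Sum>s=0..<r. y s * (U $$ (i,s) * z i))"
    proof (rule sum.cong[OF refl])
      fix i
      have "(\<Sum>s=0..<r. y s * (U $$ (i,s) * z i)) = (\<Sum>s=0..<r. U $$ (i,s) * y s) * z i"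
        by (simp add: sum_distrib_left sum_distrib_right mult_ac)
      also have "\<dots> = z i * z i" by (simp add: z_def)
      finally show "(z i)\<^sup>2 = (\<Sum>s=0..<r. y s * (U $$ (i,s) * z i))" by (simp add: power2_eq_square)
    qed
    also have "\<dots> = (\<Sum>s=0..<r. y s * (\<Sum>i=0..<n. U $$ (i,s) * z i))"
      by (subst sum.swap) (simp add: sum_distrib_left)
    also have "\<dots> = (\<Sum>s=0..<r. (y s)\<^sup>2)"
      by (rule sum.cong) (auto simp: Uz power2_eq_square)
    finally show ?thesis .
  qed
  have "0 \<le> (\<Sum>i=0..<n. (w i - z i)\<^sup>2)" by (rule sum_nonneg) simp
  also have "\<dots> = (\<Sum>i=0..<n. (w i)\<^sup>2) - 2 * (\<Sum>i=0..<n. w i * z i) + (\<Sum>i=0..<n. (z i)\<^sup>2)"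
    by (simp add: power2_diff sum.distrib sum_subtractf sum_distrib_left mult.assoc)
  finally show ?thesis unfolding wz zz y_def by simp
qed

lemma svd_facts:
  assumes "compact_svd M U S V" "M \<in> carrier_mat n m"
  obtains r where "U \<in> carrier_mat n r" "V \<in> carrier_mat m r" "S \<in> carrier_mat r r"
    "diagonal_mat S" "\<forall>i<r. S $$ (i,i) > 0" "transpose_mat U * U = 1\<^sub>m r" "transpose_mat V * V = 1\<^sub>m r"
    "M = U * S * transpose_mat V"
  using assms unfolding compact_svd_def by auto

lemma svd_entry:
  assumes U: "U \<in> carrier_mat n r" and V: "V \<in> carrier_mat m r" and S: "S \<in> carrier_mat r r"
    and dS: "diagonal_mat S" and i: "i < n" and j: "j < m"
  shows "(U * S * transpose_mat V) $$ (i,j) = (\<Sum>k=0..<r. U $$ (i,k) * S $$ (k,k) * V $$ (j,k))"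
proof -
  have US: "(U * S) $$ (i,k) = U $$ (i,k) * S $$ (k,k)" if k: "k < r" for k
  proof -
    have "(U * S) $$ (i,k) = (\<Sum>a=0..<r. U $$ (i,a) * S $$ (a,k))"
      using i k U S by (simp add: scalar_prod_def)
    also have "\<dots> = (\<Sum>a=0..<r. if a = k then U $$ (i,k) * S $$ (k,k) else 0)"
      by (rule sum.cong) (use dS S k in \<open>auto simp: diagonal_mat_def\<close>)
    finally show ?thesis using k by simp
  qed
  have "(U * S * transpose_mat V) $$ (i,j) = (\<Sum>k=0..<r. (U * S) $$ (i,k) * V $$ (j,k))"
    using i j U S V by (simp add: scalar_prod_def del: assoc_mult_mat)
  also have "\<dots> = (\<Sum>k=0..<r. U $$ (i,k) * S $$ (k,k) * V $$ (j,k))"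
    by (rule sum.cong) (auto simp: US)
  finally show ?thesis .
qed

lemma svd_trace:
  fixes U S V M :: "real mat"
  assumes U: "U \<in> carrier_mat n r" and V: "V \<in> carrier_mat m r" and S: "S \<in> carrier_mat r r"
    and UU: "transpose_mat U * U = 1\<^sub>m r" and VV: "transpose_mat V * V = 1\<^sub>m r"
    and M: "M = U * S * transpose_mat V"
  shows "(\<Sum>s=0..<r. S $$ (s,s)) = (\<Sum>s=0..<r. \<Sum>i=0..<n. \<Sum>j=0..<m. U $$ (i,s) * M $$ (i,j) * V $$ (j,s))"
proof -
  have Mc: "M \<in> carrier_mat n m" using M U V S by auto
  have "transpose_mat U * M * V = S"
  proof -
    have "transpose_mat U * M * V = (transpose_mat U * U) * S * (transpose_mat V * V)"
    proof -
      have e1: "transpose_mat U * (U * S * transpose_mat V) = (transpose_mat U * (U * S)) * transpose_mat V"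
        by (rule assoc_mult_mat[symmetric]) (use U S V in auto)
      have e2: "transpose_mat U * (U * S) = (transpose_mat U * U) * S"
        by (rule assoc_mult_mat[symmetric]) (use U S V in auto)
      have e3: "(transpose_mat U * U) * S * transpose_mat V * V = (transpose_mat U * U) * S * (transpose_mat V * V)"
        by (rule assoc_mult_mat) (use U S V in auto)
      show ?thesis unfolding M e1 e2 e3 ..
    qed
    thus ?thesis using UU VV S by simp
  qed
  hence "S $$ (s,s) = (transpose_mat U * M * V) $$ (s,s)" for s by simp
  moreover have "s < r \<Longrightarrow> (transpose_mat U * M * V) $$ (s,s) = (\<Sum>i=0..<n. \<Sum>j=0..<m. U $$ (i,s) * M $$ (i,j) * V $$ (j,s))" for s
  proof -
    assume s: "s < r"
    have "(transpose_mat U * M * V) $$ (s,s) = (\<Sum>j=0..<m. (\<Sum>i=0..<n. U $$ (i,s) * M $$ (i,j)) * V $$ (j,s))"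
      using s U Mc V by (simp add: scalar_prod_def del: assoc_mult_mat)
    also have "\<dots> = (\<Sum>j=0..<m. \<Sum>i=0..<n. U $$ (i,s) * M $$ (i,j) * V $$ (j,s))"
      by (simp add: sum_distrib_right)
    also have "\<dots> = (\<Sum>i=0..<n. \<Sum>j=0..<m. U $$ (i,s) * M $$ (i,j) * V $$ (j,s))" by (rule sum.swap)
    finally show ?thesis .
  qed
  ultimately show ?thesis by simp
qed

lemma sum_sep: "(\<Sum>i\<in>I. \<Sum>j\<in>J. (c::real) * (f i * g j)) = c * ((\<Sum>i\<in>I. f i) * (\<Sum>j\<in>J. g j))"
proof -
  have "(\<Sum>i\<in>I. \<Sum>j\<in>J. c * (f i * g j)) = (\<Sum>i\<in>I. (c * f i) * (\<Sum>j\<in>J. g j))"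
    by (rule sum.cong[OF refl]) (simp add: sum_distrib_left mult.assoc)
  also have "\<dots> = (\<Sum>i\<in>I. c * f i) * (\<Sum>j\<in>J. g j)" by (rule sum_distrib_right[symmetric])
  also have "\<dots> = c * ((\<Sum>i\<in>I. f i) * (\<Sum>j\<in>J. g j))" by (simp add: sum_distrib_left[symmetric])
  finally show ?thesis .
qed

theorem lemma3:
  fixes A B :: "real mat" and n m :: nat
  assumes "A \<in> carrier_mat n m" and "B \<in> carrier_mat n m"
  shows "trace_norm (hadamard A B) \<le> (coherence A)\<^sup>2 * trace_norm A * trace_norm B"
proof -
  note Ac = assms(1) and Bc = assms(2)
  define H where "H = hadamard A B"
  have Hc: "H \<in> carrier_mat n m" using Ac unfolding H_def hadamard_def by auto
  have Hent: "i < n \<Longrightarrow> j < m \<Longrightarrow> H $$ (i,j) = A $$ (i,j) * B $$ (i,j)" for i j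
    using Ac unfolding H_def hadamard_def by auto
  obtain P Sa Qa where sa: "some_svd A = (P,Sa,Qa)" by (cases "some_svd A") auto
  obtain X Sb Y where sb: "some_svd B = (X,Sb,Y)" by (cases "some_svd B") auto
  obtain U Sc V where sc: "some_svd H = (U,Sc,V)" by (cases "some_svd H") auto
  obtain rA where rA: "P \<in> carrier_mat n rA" "Qa \<in> carrier_mat m rA" "Sa \<in> carrier_mat rA rA"
    "diagonal_mat Sa" "\<forall>i<rA. Sa $$ (i,i) > 0" "transpose_mat P * P = 1\<^sub>m rA" "transpose_mat Qa * Qa = 1\<^sub>m rA"
    "A = P * Sa * transpose_mat Qa"
    using svd_facts[OF some_svd_ok[OF Ac sa] Ac] by metis
  obtain rB where rB: "X \<in> carrier_mat n rB" "Y \<in> carrier_mat m rB" "Sb \<in> carrier_mat rB rB"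
    "diagonal_mat Sb" "\<forall>i<rB. Sb $$ (i,i) > 0" "transpose_mat X * X = 1\<^sub>m rB" "transpose_mat Y * Y = 1\<^sub>m rB"
    "B = X * Sb * transpose_mat Y"
    using svd_facts[OF some_svd_ok[OF Bc sb] Bc] by metis
  obtain rC where rC: "U \<in> carrier_mat n rC" "V \<in> carrier_mat m rC" "Sc \<in> carrier_mat rC rC"
    "diagonal_mat Sc" "\<forall>i<rC. Sc $$ (i,i) > 0" "transpose_mat U * U = 1\<^sub>m rC" "transpose_mat V * V = 1\<^sub>m rC"
    "H = U * Sc * transpose_mat V"
    using svd_facts[OF some_svd_ok[OF Hc sc] Hc] by metis
  define sg where "sg k = Sa $$ (k,k)" for k
  define tu where "tu l = Sb $$ (l,l)" for l
  have trA: "trace_norm A = (\<Sum>k=0..<rA. sg k)"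
    unfolding trace_norm_def sa sg_def using rA(3) by (simp add: atLeast0LessThan)
  have trB: "trace_norm B = (\<Sum>l=0..<rB. tu l)"
    unfolding trace_norm_def sb tu_def using rB(3) by (simp add: atLeast0LessThan)
  have trH: "trace_norm H = (\<Sum>s=0..<rC. Sc $$ (s,s))"
    unfolding trace_norm_def sc using rC(3) by (simp add: atLeast0LessThan)
  define mu where "mu = coherence A"
  have muP: "i < n \<Longrightarrow> row_norm P i \<le> mu" for i
    unfolding mu_def coherence_def sa using rA(1,2) by (auto intro!: Max_ge)
  have muQ: "j < m \<Longrightarrow> row_norm Qa j \<le> mu" for j
    unfolding mu_def coherence_def sa using rA(1,2) by (auto intro!: Max_ge)
  have mu0: "mu \<ge> 0"
    unfolding mu_def coherence_def sa by (auto intro!: Max_ge)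
  have Pb: "(P $$ (i,k))\<^sup>2 \<le> mu\<^sup>2" if i: "i < n" and k: "k < rA" for i k
  proof -
    have "(P $$ (i,k))\<^sup>2 \<le> (\<Sum>t<rA. (P $$ (i,t))\<^sup>2)" by (rule member_le_sum) (use k in auto)
    also have "\<dots> = (row_norm P i)\<^sup>2" unfolding row_norm_def using rA(1) by (simp add: sum_nonneg)
    also have "\<dots> \<le> mu\<^sup>2" using muP[OF i] unfolding row_norm_def
      by (intro power_mono) (auto intro: sum_nonneg)
    finally show ?thesis .
  qed
  have Qb: "(Qa $$ (j,k))\<^sup>2 \<le> mu\<^sup>2" if j: "j < m" and k: "k < rA" for j k
  proof -
    have "(Qa $$ (j,k))\<^sup>2 \<le> (\<Sum>t<rA. (Qa $$ (j,t))\<^sup>2)" by (rule member_le_sum) (use k in auto)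
    also have "\<dots> = (row_norm Qa j)\<^sup>2" unfolding row_norm_def using rA(2) by (simp add: sum_nonneg)
    also have "\<dots> \<le> mu\<^sup>2" using muQ[OF j] unfolding row_norm_def
      by (intro power_mono) (auto intro: sum_nonneg)
    finally show ?thesis .
  qed
  have Aent: "i < n \<Longrightarrow> j < m \<Longrightarrow> A $$ (i,j) = (\<Sum>k=0..<rA. sg k * P $$ (i,k) * Qa $$ (j,k))" for i j
    using svd_entry[OF rA(1,2,3,4)] rA(8) unfolding sg_def by (simp add: mult_ac)
  have Bent: "i < n \<Longrightarrow> j < m \<Longrightarrow> B $$ (i,j) = (\<Sum>l=0..<rB. tu l * X $$ (i,l) * Y $$ (j,l))" for i j
    using svd_entry[OF rB(1,2,3,4)] rB(8) unfolding tu_def by (simp add: mult_ac)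
  define a where "a s k l = (\<Sum>i=0..<n. U $$ (i,s) * (P $$ (i,k) * X $$ (i,l)))" for s k l
  define b where "b s k l = (\<Sum>j=0..<m. V $$ (j,s) * (Qa $$ (j,k) * Y $$ (j,l)))" for s k l
  have "trace_norm H = (\<Sum>s=0..<rC. \<Sum>i=0..<n. \<Sum>j=0..<m. U $$ (i,s) * H $$ (i,j) * V $$ (j,s))"
    unfolding trH by (rule svd_trace[OF rC(1,2,3,6,7,8)])
  also have "\<dots> = (\<Sum>s=0..<rC. \<Sum>i=0..<n. \<Sum>j=0..<m. \<Sum>k=0..<rA. \<Sum>l=0..<rB.
      (sg k * tu l) * ((U $$ (i,s) * (P $$ (i,k) * X $$ (i,l))) * (V $$ (j,s) * (Qa $$ (j,k) * Y $$ (j,l)))))"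
  proof (intro sum.cong refl)
    fix s i j assume i: "i \<in> {0..<n}" and j: "j \<in> {0..<m}"
    show "U $$ (i,s) * H $$ (i,j) * V $$ (j,s) = (\<Sum>k=0..<rA. \<Sum>l=0..<rB.
      (sg k * tu l) * ((U $$ (i,s) * (P $$ (i,k) * X $$ (i,l))) * (V $$ (j,s) * (Qa $$ (j,k) * Y $$ (j,l)))))"
      using i j by (simp add: Hent Aent Bent sum_product sum_distrib_left mult_ac) (rule sum.swap)
  qed
  also have "\<dots> = (\<Sum>s=0..<rC. \<Sum>k=0..<rA. \<Sum>l=0..<rB. \<Sum>i=0..<n. \<Sum>j=0..<m.
      (sg k * tu l) * ((U $$ (i,s) * (P $$ (i,k) * X $$ (i,l))) * (V $$ (j,s) * (Qa $$ (j,k) * Y $$ (j,l)))))"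
    by (intro sum.cong refl sum4_swap)
  also have "\<dots> = (\<Sum>k=0..<rA. \<Sum>l=0..<rB. \<Sum>s=0..<rC. \<Sum>i=0..<n. \<Sum>j=0..<m.
      (sg k * tu l) * ((U $$ (i,s) * (P $$ (i,k) * X $$ (i,l))) * (V $$ (j,s) * (Qa $$ (j,k) * Y $$ (j,l)))))"
    by (rule sum3_swap)
  also have "\<dots> = (\<Sum>k=0..<rA. \<Sum>l=0..<rB. \<Sum>s=0..<rC. (sg k * tu l) * (a s k l * b s k l))"
    unfolding a_def b_def by (intro sum.cong refl sum_sep)
  also have "\<dots> = (\<Sum>k=0..<rA. \<Sum>l=0..<rB. (sg k * tu l) * (\<Sum>s=0..<rC. a s k l * b s k l))"
    by (simp add: sum_distrib_left)
  also have "\<dots> \<le> (\<Sum>k=0..<rA. \<Sum>l=0..<rB. (sg k * tu l) * mu\<^sup>2)"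
  proof (intro sum_mono)
    fix k l assume k: "k \<in> {0..<rA}" and l: "l \<in> {0..<rB}"
    have sgp: "sg k * tu l \<ge> 0" using rA(5) rB(5) k l unfolding sg_def tu_def
      by (simp add: less_imp_le)
    have ha: "(\<Sum>s=0..<rC. (a s k l)\<^sup>2) \<le> mu\<^sup>2"
    proof -
      have "(\<Sum>s=0..<rC. (a s k l)\<^sup>2) \<le> (\<Sum>i=0..<n. (P $$ (i,k) * X $$ (i,l))\<^sup>2)"
        unfolding a_def by (rule bessel[OF rC(1,6)])
      also have "\<dots> \<le> (\<Sum>i=0..<n. mu\<^sup>2 * (X $$ (i,l) * X $$ (i,l)))"
        by (rule sum_mono) (use Pb k in \<open>auto simp: power_mult_distrib power2_eq_square[of "X $$ _"] intro!: mult_right_mono\<close>)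
      also have "\<dots> = mu\<^sup>2" using orth_entry[OF rB(1,6), of l l] l by (simp add: sum_distrib_left[symmetric])
      finally show ?thesis .
    qed
    have hb: "(\<Sum>s=0..<rC. (b s k l)\<^sup>2) \<le> mu\<^sup>2"
    proof -
      have "(\<Sum>s=0..<rC. (b s k l)\<^sup>2) \<le> (\<Sum>j=0..<m. (Qa $$ (j,k) * Y $$ (j,l))\<^sup>2)"
        unfolding b_def by (rule bessel[OF rC(2,7)])
      also have "\<dots> \<le> (\<Sum>j=0..<m. mu\<^sup>2 * (Y $$ (j,l) * Y $$ (j,l)))"
        by (rule sum_mono) (use Qb k in \<open>auto simp: power_mult_distrib power2_eq_square[of "Y $$ _"] intro!: mult_right_mono\<close>)
      also have "\<dots> = mu\<^sup>2" using orth_entry[OF rB(2,7), of l l] l by (simp add: sum_distrib_left[symmetric])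
      finally show ?thesis .
    qed
    have "(\<Sum>s=0..<rC. a s k l * b s k l) \<le> sqrt (\<Sum>s=0..<rC. (a s k l)\<^sup>2) * sqrt (\<Sum>s=0..<rC. (b s k l)\<^sup>2)"
      by (rule cs_sqrt)
    also have "\<dots> \<le> sqrt (mu\<^sup>2) * sqrt (mu\<^sup>2)"
      by (intro mult_mono real_sqrt_le_mono ha hb) (auto intro: sum_nonneg)
    also have "\<dots> = mu\<^sup>2" using mu0 by (simp add: power2_eq_square)
    finally show "(sg k * tu l) * (\<Sum>s=0..<rC. a s k l * b s k l) \<le> (sg k * tu l) * mu\<^sup>2"
      by (rule mult_left_mono) (rule sgp)
  qed
  also have "\<dots> = mu\<^sup>2 * trace_norm A * trace_norm B"
  proof -
    have "(\<Sum>k=0..<rA. \<Sum>l=0..<rB. (sg k * tu l) * mu\<^sup>2) = (\<Sum>k=0..<rA. \<Sum>l=0..<rB. mu\<^sup>2 * (sg k * tu l))"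
      by (simp add: mult.commute)
    also have "\<dots> = mu\<^sup>2 * ((\<Sum>k=0..<rA. sg k) * (\<Sum>l=0..<rB. tu l))" by (rule sum_sep)
    finally show ?thesis unfolding trA trB by (simp add: mult.assoc)
  qed
  finally show ?thesis unfolding H_def mu_def .
qed

end
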